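(* In the binary random graph affiliation mixture model with uniform group priors $\pi_q=1/Q$ and $\alpha\ne\beta$, the parameters $\alpha$, $\beta$ and the number of groups $Q\ge2$ are identifiable from the joint distribution of $K_4$: any two parameter triples $(Q,\alpha,\beta)$, $(Q',\alpha',\beta')$ (with $\alpha\ne\beta$, $\alpha'\ne\beta'$) inducing the same law of $K_4$ are equal.
   Context: Random graph mixture model: nodes have i.i.d. latent groups $Z_i\in\{1,\dots,Q\}$ with $\pi_q=\mathbb P(Z_i=q)$; edge variables $X_{ij}$ ($i<j$) are conditionally independent given all $Z$'s, with law of $X_{ij}$ depending only on $(Z_i,Z_j)$. Binary affiliation model: $X_{ij}\in\{0,1\}$ with $\mathbb P(X_{ij}=1\mid Z_i=q,Z_j=l)=\alpha$ if $q=l$ and $=\beta$ if $q\ne l$. $K_n$ denotes the collection of the $\binom n2$ edge variables among a set of $n$ nodes. *)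

theory Defs
  imports Complex_Main "HOL-Library.FuncSet"
begin

definition aff_prob :: "real \<Rightarrow> real \<Rightarrow> nat \<Rightarrow> nat \<Rightarrow> real" where
  "aff_prob \<alpha> \<beta> q l = (if q = l then \<alpha> else \<beta>)"

text \<open>Probability that the edge variables X_ij (i<j<n) of K_n take the values
  x i j, obtained by summing over all latent group assignments z of the n nodes.\<close>

definition K_law :: "nat \<Rightarrow> nat \<Rightarrow> real \<Rightarrow> real \<Rightarrow> (nat \<Rightarrow> nat \<Rightarrow> bool) \<Rightarrow> real" where
  "K_law n Q \<alpha> \<beta> x =
     (\<Sum>z \<in> {..<n} \<rightarrow>\<^sub>E {..<Q}.
        (\<Prod>i<n. 1 / real Q) *
        (\<Prod>(i,j) \<in> {(i,j). i < j \<and> j < n}.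
           if x i j then aff_prob \<alpha> \<beta> (z i) (z j) else 1 - aff_prob \<alpha> \<beta> (z i) (z j)))"

end

theory Submission
  imports Defs
begin

lemma sum_PiE_insert:
  assumes "x \<notin> S"
  shows "(\<Sum>z\<in>Pi\<^sub>E (insert x S) T. f z) = (\<Sum>y\<in>T x. \<Sum>g\<in>Pi\<^sub>E S T. f (g(x := y)))"
proof -
  have "(\<Sum>z\<in>Pi\<^sub>E (insert x S) T. f z) = (\<Sum>z\<in>(\<lambda>(y, g). g(x := y)) ` (T x \<times> Pi\<^sub>E S T). f z)"
    by (simp add: PiE_insert_eq)
  also have "\<dots> = (\<Sum>(y,g)\<in>T x \<times> Pi\<^sub>E S T. f (g(x := y)))"
    by (subst sum.reindex[OF inj_combinator[OF assms]]) (simp add: case_prod_unfold)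
  also have "\<dots> = (\<Sum>y\<in>T x. \<Sum>g\<in>Pi\<^sub>E S T. f (g(x := y)))"
    by (rule sum.cartesian_product[symmetric])
  finally show ?thesis .
qed

lemma sum4:
  "(\<Sum>z\<in>{..<4::nat}\<rightarrow>\<^sub>E{..<Q}. f (z 0) (z 1) (z 2) (z 3)) =
   (\<Sum>d<Q. \<Sum>c<Q. \<Sum>b<Q. \<Sum>a<Q. (f a b c d :: real))"
proof -
  have e: "{..<4::nat} = insert 3 (insert 2 (insert 1 (insert 0 {})))" by auto
  show ?thesis unfolding e
    by (simp add: sum_PiE_insert)
qed

lemma sum_if1:
  assumes "a < Q"
  shows "(\<Sum>c<Q. if c = a then A else B) = A + (real Q - 1) * (B::real)"
proof -
  have "(\<Sum>c<Q. if c = a then A else B) = (\<Sum>c<Q. B + (if c = a then A - B else 0))"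
    by (intro sum.cong) auto
  also have "\<dots> = real Q * B + (A - B)" using assms by (simp add: sum.distrib)
  finally show ?thesis by (simp add: algebra_simps)
qed

lemma sum_if2:
  assumes "a < Q" "b < Q" "a \<noteq> b"
  shows "(\<Sum>c<Q. if c = a then A else if c = b then B else C) = A + B + (real Q - 2) * (C::real)"
proof -
  have "(\<Sum>c<Q. if c = a then A else if c = b then B else C) =
        (\<Sum>c<Q. C + (if c = a then A - C else 0) + (if c = b then B - C else 0))"
    using assms by (intro sum.cong) auto
  also have "\<dots> = real Q * C + (A - C) + (B - C)" using assms by (simp add: sum.distrib)
  finally show ?thesis by (simp add: algebra_simps)
qed

lemma sumS:
  assumes "b < Q" "c < Q"
  shows "(\<Sum>a<Q. aff_prob \<alpha> \<beta> a b * aff_prob \<alpha> \<beta> a c) =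
    (if b = c then \<alpha>^2 + (real Q - 1) * \<beta>^2 else 2*\<alpha>*\<beta> + (real Q - 2) * \<beta>^2)"
proof (cases "b = c")
  case True
  have "(\<Sum>a<Q. aff_prob \<alpha> \<beta> a b * aff_prob \<alpha> \<beta> a c) = (\<Sum>a<Q. if a = b then \<alpha>^2 else \<beta>^2)"
    using True by (intro sum.cong) (auto simp: aff_prob_def power2_eq_square)
  then show ?thesis using True assms sum_if1 by simp
next
  case False
  have "(\<Sum>a<Q. aff_prob \<alpha> \<beta> a b * aff_prob \<alpha> \<beta> a c) =
     (\<Sum>a<Q. if a = b then \<alpha>*\<beta> else if a = c then \<beta>*\<alpha> else \<beta>^2)"
    using False by (intro sum.cong) (auto simp: aff_prob_def power2_eq_square)
  then show ?thesis using False assms sum_if2[of b Q c] by simp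
qed


definition KE :: "(nat \<times> nat) set \<Rightarrow> nat \<Rightarrow> real \<Rightarrow> real \<Rightarrow> (nat \<Rightarrow> nat \<Rightarrow> bool) \<Rightarrow> real" where
  "KE E Q \<alpha> \<beta> x = (\<Sum>z \<in> {..<4::nat} \<rightarrow>\<^sub>E {..<Q}.
        (\<Prod>i<4::nat. 1 / real Q) *
        (\<Prod>(i,j) \<in> E.
           if x i j then aff_prob \<alpha> \<beta> (z i) (z j) else 1 - aff_prob \<alpha> \<beta> (z i) (z j)))"

definition fullE :: "(nat \<times> nat) set" where "fullE = {(i,j). i < j \<and> j < 4}"

lemma K_law_KE: "K_law 4 Q \<alpha> \<beta> x = KE fullE Q \<alpha> \<beta> x"
  unfolding K_law_def KE_def fullE_def by simp

lemma finite_fullE: "finite fullE"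
proof -
  have "fullE \<subseteq> {..<4} \<times> {..<4}" unfolding fullE_def by auto
  then show ?thesis using finite_subset by blast
qed

lemma marg:
  assumes "finite E" "(i,j) \<in> E"
  shows "KE E Q \<alpha> \<beta> (x(i := (x i)(j := True))) + KE E Q \<alpha> \<beta> (x(i := (x i)(j := False)))
       = KE (E - {(i,j)}) Q \<alpha> \<beta> x"
proof -
  let ?g = "\<lambda>y z. (\<lambda>(i',j'). if y i' j' then aff_prob \<alpha> \<beta> (z i') (z j') else 1 - aff_prob \<alpha> \<beta> (z i') (z j'))"
  have rest: "prod (?g (x(i := (x i)(j := b))) z) (E - {(i,j)}) = prod (?g x z) (E - {(i,j)})" for b z
    by (intro prod.cong) (auto split: if_splits)
  have split: "prod (?g y z) E = ?g y z (i,j) * prod (?g y z) (E - {(i,j)})" for y z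
    using prod.remove[OF assms] by blast
  have pt: "?g (x(i := (x i)(j := True))) z (i,j) = aff_prob \<alpha> \<beta> (z i) (z j)"
    and pf: "?g (x(i := (x i)(j := False))) z (i,j) = 1 - aff_prob \<alpha> \<beta> (z i) (z j)" for z
    by simp_all
  have "(\<Prod>i<4::nat. 1 / real Q) * prod (?g (x(i := (x i)(j := True))) z) E
      + (\<Prod>i<4::nat. 1 / real Q) * prod (?g (x(i := (x i)(j := False))) z) E
      = (\<Prod>i<4::nat. 1 / real Q) * prod (?g x z) (E - {(i,j)})" for z
    unfolding split[of "x(i := (x i)(j := True))"] split[of "x(i := (x i)(j := False))"] pt pf rest
    by (simp add: algebra_simps)
  then show ?thesis
    unfolding KE_def sum.distrib[symmetric]
    by (intro sum.cong refl) 
qed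

lemma equal_sub:
  assumes "\<forall>x. KE fullE Q \<alpha> \<beta> x = KE fullE Q' \<alpha>' \<beta>' x"
    and "finite F" "F \<subseteq> fullE"
  shows "\<forall>x. KE (fullE - F) Q \<alpha> \<beta> x = KE (fullE - F) Q' \<alpha>' \<beta>' x"
  using assms(2,3)
proof (induction F rule: finite_induct)
  case empty
  then show ?case using assms(1) by simp
next
  case (insert e F)
  obtain i j where e: "e = (i,j)" by (cases e)
  have mem: "(i,j) \<in> fullE - F" using insert e by auto
  have fin: "finite (fullE - F)" using finite_fullE by simp
  have eq: "fullE - insert e F = (fullE - F) - {(i,j)}" using e by auto
  show ?case unfolding eq
    using marg[OF fin mem, symmetric] insert by simp
qed

lemma equal_E:
  assumes "\<forall>x. KE fullE Q \<alpha> \<beta> x = KE fullE Q' \<alpha>' \<beta>' x" "E \<subseteq> fullE"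
  shows "KE E Q \<alpha> \<beta> x = KE E Q' \<alpha>' \<beta>' x"
proof -
  have "fullE - (fullE - E) = E" using assms(2) by auto
  then show ?thesis using equal_sub[OF assms(1), of "fullE - E"] finite_fullE by auto
qed


lemma prod4: "(\<Prod>i<4::nat. 1 / real Q) = (1 / real Q)^4" by simp

lemma sum_ap: "b < Q \<Longrightarrow> (\<Sum>a<Q. aff_prob \<alpha> \<beta> a b) = \<alpha> + (real Q - 1) * \<beta>"
  unfolding aff_prob_def using sum_if1 by simp

lemma KE1:
  assumes "Q \<ge> 1"
  shows "KE {(0,1)} Q \<alpha> \<beta> (\<lambda>_ _. True) = (\<alpha> + (real Q - 1) * \<beta>) / real Q"
proof -
  let ?K = "(1 / real Q)^4"
  have "KE {(0,1)} Q \<alpha> \<beta> (\<lambda>_ _. True) =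
    (\<Sum>z\<in>{..<4::nat}\<rightarrow>\<^sub>E{..<Q}. (\<lambda>a b c d. ?K * aff_prob \<alpha> \<beta> a b) (z 0) (z 1) (z 2) (z 3))"
    unfolding KE_def prod4 by simp
  also have "\<dots> = (\<Sum>d<Q. \<Sum>c<Q. \<Sum>b<Q. \<Sum>a<Q. ?K * aff_prob \<alpha> \<beta> a b)"
    by (rule sum4)
  also have "\<dots> = (\<Sum>d<Q. \<Sum>c<Q. \<Sum>b<Q. ?K * (\<alpha> + (real Q - 1) * \<beta>))"
    by (simp add: sum_distrib_left[symmetric] sum_ap)
  also have "\<dots> = (\<alpha> + (real Q - 1) * \<beta>) / real Q"
    using assms by (simp add: power4_eq_xxxx field_simps)
  finally show ?thesis .
qed

lemma KE3:
  assumes "Q \<ge> 1"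
  shows "KE {(0,1),(0,2),(1,2)} Q \<alpha> \<beta> (\<lambda>_ _. True) =
    (\<alpha> * (\<alpha>^2 + (real Q - 1) * \<beta>^2) + (real Q - 1) * (\<beta> * (2*\<alpha>*\<beta> + (real Q - 2) * \<beta>^2))) / real Q^2"
proof -
  let ?K = "(1 / real Q)^4"
  let ?s1 = "\<alpha>^2 + (real Q - 1) * \<beta>^2" and ?s2 = "2*\<alpha>*\<beta> + (real Q - 2) * \<beta>^2"
  have "KE {(0,1),(0,2),(1,2)} Q \<alpha> \<beta> (\<lambda>_ _. True) =
    (\<Sum>z\<in>{..<4::nat}\<rightarrow>\<^sub>E{..<Q}. (\<lambda>a b c d. ?K * aff_prob \<alpha> \<beta> b c * (aff_prob \<alpha> \<beta> a b * aff_prob \<alpha> \<beta> a c)) (z 0) (z 1) (z 2) (z 3))"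
    unfolding KE_def prod4 by (simp add: mult_ac)
  also have "\<dots> = (\<Sum>d<Q. \<Sum>c<Q. \<Sum>b<Q. \<Sum>a<Q. ?K * aff_prob \<alpha> \<beta> b c * (aff_prob \<alpha> \<beta> a b * aff_prob \<alpha> \<beta> a c))"
    by (rule sum4)
  also have "\<dots> = (\<Sum>d<Q. \<Sum>c<Q. \<Sum>b<Q. ?K * (if b = c then \<alpha> * ?s1 else \<beta> * ?s2))"
    by (intro sum.cong refl) (simp add: sum_distrib_left[symmetric] sumS, simp add: aff_prob_def)
  also have "\<dots> = (\<Sum>d<Q. \<Sum>c<Q. ?K * (\<alpha> * ?s1 + (real Q - 1) * (\<beta> * ?s2)))"
    by (intro sum.cong refl) (simp add: sum_distrib_left[symmetric] sum_if1)
  also have "\<dots> = (\<alpha> * ?s1 + (real Q - 1) * (\<beta> * ?s2)) / real Q^2"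
    using assms by (simp add: power4_eq_xxxx power2_eq_square field_simps)
  finally show ?thesis .
qed

lemma KE4:
  assumes "Q \<ge> 1"
  shows "KE {(0,2),(1,2),(1,3),(0,3)} Q \<alpha> \<beta> (\<lambda>_ _. True) =
    ((\<alpha>^2 + (real Q - 1) * \<beta>^2)^2 + (real Q - 1) * (2*\<alpha>*\<beta> + (real Q - 2) * \<beta>^2)^2) / real Q^3"
proof -
  let ?K = "(1 / real Q)^4"
  let ?s1 = "\<alpha>^2 + (real Q - 1) * \<beta>^2" and ?s2 = "2*\<alpha>*\<beta> + (real Q - 2) * \<beta>^2"
  have "KE {(0,2),(1,2),(1,3),(0,3)} Q \<alpha> \<beta> (\<lambda>_ _. True) =
    (\<Sum>z\<in>{..<4::nat}\<rightarrow>\<^sub>E{..<Q}. (\<lambda>a b c d. ?K * (aff_prob \<alpha> \<beta> b c * aff_prob \<alpha> \<beta> b d) * (aff_prob \<alpha> \<beta> a c * aff_prob \<alpha> \<beta> a d)) (z 0) (z 1) (z 2) (z 3))"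
    unfolding KE_def prod4 by (simp add: mult_ac)
  also have "\<dots> = (\<Sum>d<Q. \<Sum>c<Q. \<Sum>b<Q. \<Sum>a<Q. ?K * (aff_prob \<alpha> \<beta> b c * aff_prob \<alpha> \<beta> b d) * (aff_prob \<alpha> \<beta> a c * aff_prob \<alpha> \<beta> a d))"
    by (rule sum4)
  also have "\<dots> = (\<Sum>d<Q. \<Sum>c<Q. ?K * (if c = d then ?s1 * ?s1 else ?s2 * ?s2))"
    by (intro sum.cong refl) (simp add: sum_distrib_left[symmetric] sum_distrib_right[symmetric] sumS)
  also have "\<dots> = (\<Sum>d<Q. ?K * (?s1 * ?s1 + (real Q - 1) * (?s2 * ?s2)))"
    by (intro sum.cong refl) (simp add: sum_distrib_left[symmetric] sum_if1)
  also have "\<dots> = (?s1^2 + (real Q - 1) * ?s2^2) / real Q^3"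
    using assms by (simp add: power4_eq_xxxx power2_eq_square power3_eq_cube field_simps)
  finally show ?thesis .
qed


lemma id3: "q > (0::real) \<Longrightarrow> (\<alpha> * (\<alpha>^2 + (q - 1) * \<beta>^2) + (q - 1) * (\<beta> * (2*\<alpha>*\<beta> + (q - 2) * \<beta>^2))) / q^2 = (\<beta> + (\<alpha> - \<beta>) * (1/q))^3 + (\<alpha> - \<beta>)^3 * (1/q)^2 * (1 - 1/q)"
  by (simp add: field_simps power3_eq_cube power2_eq_square)
lemma id4: "q > (0::real) \<Longrightarrow> ((\<alpha>^2 + (q - 1) * \<beta>^2)^2 + (q - 1) * (2*\<alpha>*\<beta> + (q - 2) * \<beta>^2)^2) / q^3 = (\<beta> + (\<alpha> - \<beta>) * (1/q))^4 + (\<alpha> - \<beta>)^4 * (1/q)^3 * (1 - 1/q)"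
  by (simp add: field_simps power4_eq_xxxx power3_eq_cube power2_eq_square)

lemma forms:
  assumes Q1: "Q \<ge> 1"
  defines "p \<equiv> 1 / real Q"
  shows "KE {(0,1)} Q \<alpha> \<beta> (\<lambda>_ _. True) = \<beta> + (\<alpha> - \<beta>) * p"
    and "KE {(0,1),(0,2),(1,2)} Q \<alpha> \<beta> (\<lambda>_ _. True) = (\<beta> + (\<alpha> - \<beta>) * p)^3 + (\<alpha> - \<beta>)^3 * p^2 * (1 - p)"
    and "KE {(0,2),(1,2),(1,3),(0,3)} Q \<alpha> \<beta> (\<lambda>_ _. True) = (\<beta> + (\<alpha> - \<beta>) * p)^4 + (\<alpha> - \<beta>)^4 * p^3 * (1 - p)"
proof -
  have Q: "real Q > 0" using assms by simp
  show "KE {(0,1)} Q \<alpha> \<beta> (\<lambda>_ _. True) = \<beta> + (\<alpha> - \<beta>) * p"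
    unfolding KE1[OF Q1] p_def using Q by (simp add: field_simps)
  show "KE {(0,1),(0,2),(1,2)} Q \<alpha> \<beta> (\<lambda>_ _. True) = (\<beta> + (\<alpha> - \<beta>) * p)^3 + (\<alpha> - \<beta>)^3 * p^2 * (1 - p)"
    unfolding KE3[OF Q1] p_def using id3[OF Q] .
  show "KE {(0,2),(1,2),(1,3),(0,3)} Q \<alpha> \<beta> (\<lambda>_ _. True) = (\<beta> + (\<alpha> - \<beta>) * p)^4 + (\<alpha> - \<beta>)^4 * p^3 * (1 - p)"
    unfolding KE4[OF Q1] p_def using id4[OF Q] .
qed

lemma alg:
  fixes a b p a' b' p' :: real
  assumes "0 < p" "p < 1" "0 < p'" "p' < 1" "a \<noteq> 0" "a' \<noteq> 0"
    and e1: "b + a * p = b' + a' * p'"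
    and e3: "(b + a * p)^3 + a^3 * p^2 * (1 - p) = (b' + a' * p')^3 + a'^3 * p'^2 * (1 - p')"
    and e4: "(b + a * p)^4 + a^4 * p^3 * (1 - p) = (b' + a' * p')^4 + a'^4 * p'^3 * (1 - p')"
  shows "a = a' \<and> p = p' \<and> b = b'"
proof -
  define t where "t = a^3 * p^2 * (1 - p)"
  have t: "t = a'^3 * p'^2 * (1 - p')" using e1 e3 unfolding t_def by simp
  have c4: "a^4 * p^3 * (1 - p) = a'^4 * p'^3 * (1 - p')" using e1 e4 by simp
  have "(a*p) * t = a^4 * p^3 * (1 - p)" unfolding t_def
    by (simp add: power3_eq_cube power4_eq_xxxx power2_eq_square algebra_simps)
  moreover have "(a'*p') * t = a'^4 * p'^3 * (1 - p')" unfolding t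
    by (simp add: power3_eq_cube power4_eq_xxxx power2_eq_square algebra_simps)
  ultimately have c: "(a*p) * t = (a'*p') * t" using c4 by simp
  have "t \<noteq> 0" unfolding t_def using assms by simp
  then have u: "a * p = a' * p'" using c by simp
  have t1: "t = (a*p)^2 * (a - a*p)" unfolding t_def by (simp add: power3_eq_cube power2_eq_square algebra_simps)
  have t2: "t = (a'*p')^2 * (a' - a'*p')" unfolding t by (simp add: power3_eq_cube power2_eq_square algebra_simps)
  have "a * p \<noteq> 0" using assms by simp
  then have "a - a*p = a' - a'*p'" using t1 t2 u by simp
  then have aa: "a = a'" using u by simp
  then have "p = p'" using u assms by simp
  then show ?thesis using aa e1 by simp
qed

theorem corollary3:
  fixes Q Q' :: nat and \<alpha> \<beta> \<alpha>' \<beta>' :: real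
  assumes "Q \<ge> 2" and "Q' \<ge> 2"
    and "0 \<le> \<alpha>" "\<alpha> \<le> 1" "0 \<le> \<beta>" "\<beta> \<le> 1"
    and "0 \<le> \<alpha>'" "\<alpha>' \<le> 1" "0 \<le> \<beta>'" "\<beta>' \<le> 1"
    and "\<alpha> \<noteq> \<beta>" and "\<alpha>' \<noteq> \<beta>'"
    and "\<forall>x. K_law 4 Q \<alpha> \<beta> x = K_law 4 Q' \<alpha>' \<beta>' x"
  shows "Q = Q' \<and> \<alpha> = \<alpha>' \<and> \<beta> = \<beta>'"
proof -
  have H: "\<forall>x. KE fullE Q \<alpha> \<beta> x = KE fullE Q' \<alpha>' \<beta>' x"
    using assms(13) by (simp add: K_law_KE)
  have s1: "{(0,1)} \<subseteq> fullE" and s3: "{(0,1),(0,2),(1,2)} \<subseteq> fullE"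
    and s4: "{(0,2),(1,2),(1,3),(0,3)} \<subseteq> fullE" by (auto simp: fullE_def)
  have Q1: "Q \<ge> 1" "Q' \<ge> 1" using assms by auto
  have p: "0 < 1 / real Q" "1 / real Q < 1" "0 < 1 / real Q'" "1 / real Q' < 1"
    using assms(1,2) by auto
  have r: "\<alpha> - \<beta> = \<alpha>' - \<beta>' \<and> 1 / real Q = 1 / real Q' \<and> \<beta> = \<beta>'"
    apply (rule alg[OF p])
    using assms(11,12) equal_E[OF H s1, of "\<lambda>_ _. True"] equal_E[OF H s3, of "\<lambda>_ _. True"]
      equal_E[OF H s4, of "\<lambda>_ _. True"] forms[OF Q1(1), of \<alpha> \<beta>] forms[OF Q1(2), of \<alpha>' \<beta>']
    by auto
  then have "real Q = real Q'" by simp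
  then show ?thesis using r by simp
qed

end
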